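(* Let $A,B$ be $K$-algebras with filtrations $\mathcal{F}=\{V_i\}_{i\ge0}$ and $\mathcal{G}=\{W_i\}_{i\ge0}$ respectively, and equip $A\oplus B$ with the filtration $\mathcal{H}=\{V_i\oplus W_i\}_{i\ge0}$. Then $$\mathrm{h}_{\mathrm{alg}}(A\oplus B,\mathcal{H})=\max\{\mathrm{h}_{\mathrm{alg}}(A,\mathcal{F}),\mathrm{h}_{\mathrm{alg}}(B,\mathcal{G})\}.$$
   Context: A filtration of $A$ is a family $\{V_n\}_{n\ge0}$ of subspaces with $0=V_0\subseteq V_1\subseteq\cdots$, $A=\bigcup_nV_n$, $V_nV_m\subseteq V_{n+m}$, with finite-dimensional quotients. $\mathrm{h}_{\mathrm{alg}}(A,\mathcal{F})=0$ if $A$ is finite-dimensional and otherwise $\limsup_n\frac1n\log\dim(V_n/V_{n-1})$. $A\oplus B$ is the direct product algebra with componentwise operations. *)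

theory Defs
  imports "HOL-Analysis.Analysis" "HOL-Library.Product_Plus"
begin

definition K_algebra :: "('k::field \<Rightarrow> 'a::ab_group_add \<Rightarrow> 'a) \<Rightarrow> ('a \<Rightarrow> 'a \<Rightarrow> 'a) \<Rightarrow> bool" where
  "K_algebra s m \<longleftrightarrow> vector_space s
     \<and> (\<forall>x y z. m (m x y) z = m x (m y z))
     \<and> (\<forall>x y z. m x (y + z) = m x y + m x z \<and> m (x + y) z = m x z + m y z)
     \<and> (\<forall>c x y. m (s c x) y = s c (m x y) \<and> m x (s c y) = s c (m x y))
     \<and> (\<exists>e. \<forall>x. m e x = x \<and> m x e = x)"

text \<open>A filtration: subspaces 0 = V 0 \<subseteq> V 1 \<subseteq> ..., exhausting A, with V n V k \<subseteq> V (n+k),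
and finite-dimensional quotients V n / V (n-1) (i.e. V n is spanned by V (n-1) and finitely
many further vectors).\<close>
definition is_filtration :: "('k::field \<Rightarrow> 'a::ab_group_add \<Rightarrow> 'a) \<Rightarrow> ('a \<Rightarrow> 'a \<Rightarrow> 'a) \<Rightarrow> (nat \<Rightarrow> 'a set) \<Rightarrow> bool" where
  "is_filtration s m V \<longleftrightarrow> V 0 = {0}
     \<and> (\<forall>n. module.subspace s (V n))
     \<and> (\<forall>n. V n \<subseteq> V (Suc n))
     \<and> (\<Union>n. V n) = UNIV
     \<and> (\<forall>n k x y. x \<in> V n \<longrightarrow> y \<in> V k \<longrightarrow> m x y \<in> V (n + k))
     \<and> (\<forall>n. \<exists>B. finite B \<and> V (Suc n) \<subseteq> module.span s (B \<union> V n))"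

definition quot_dim :: "('k::field \<Rightarrow> 'a::ab_group_add \<Rightarrow> 'a) \<Rightarrow> (nat \<Rightarrow> 'a set) \<Rightarrow> nat \<Rightarrow> nat" where
  "quot_dim s V n = vector_space.dim s (V n) - vector_space.dim s (V (n - 1))"

definition fin_dim_space :: "('k::field \<Rightarrow> 'a::ab_group_add \<Rightarrow> 'a) \<Rightarrow> bool" where
  "fin_dim_space s \<longleftrightarrow> (\<exists>B. finite B \<and> module.span s B = UNIV)"

text \<open>Algebraic entropy; log 0 is read as -\<infinity>.\<close>
definition h_alg :: "('k::field \<Rightarrow> 'a::ab_group_add \<Rightarrow> 'a) \<Rightarrow> (nat \<Rightarrow> 'a set) \<Rightarrow> ereal" where
  "h_alg s V = (if fin_dim_space s then 0
     else limsup (\<lambda>n. if quot_dim s V n = 0 then -\<infinity>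
                       else ereal (ln (real (quot_dim s V n)) / real n)))"

definition prod_scale :: "('k \<Rightarrow> 'a \<Rightarrow> 'a) \<Rightarrow> ('k \<Rightarrow> 'b \<Rightarrow> 'b) \<Rightarrow> 'k \<Rightarrow> 'a \<times> 'b \<Rightarrow> 'a \<times> 'b" where
  "prod_scale sA sB c p = (sA c (fst p), sB c (snd p))"

definition prod_mult :: "('a \<Rightarrow> 'a \<Rightarrow> 'a) \<Rightarrow> ('b \<Rightarrow> 'b \<Rightarrow> 'b) \<Rightarrow> 'a \<times> 'b \<Rightarrow> 'a \<times> 'b \<Rightarrow> 'a \<times> 'b" where
  "prod_mult mA mB p q = (mA (fst p) (fst q), mB (snd p) (snd q))"

end

theory Submission
  imports Defs
begin

context vector_space begin

lemma fd_basis: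
  assumes "T \<subseteq> span F" "finite F"
  obtains B where "B \<subseteq> T" "independent B" "T \<subseteq> span B" "card B = dim T" "finite B"
proof -
  obtain B where B: "B \<subseteq> T" "independent B" "T \<subseteq> span B" "card B = dim T"
    using basis_exists by blast
  have "finite B" using independent_span_bound[OF assms(2) B(2)] B(1) assms(1) by blast
  with B that show ?thesis by blast
qed

lemma fd_dim_le:
  assumes "S \<subseteq> T" "T \<subseteq> span F" "finite F"
  shows "dim S \<le> dim T"
proof -
  obtain B where B: "B \<subseteq> T" "independent B" "T \<subseteq> span B" "card B = dim T" "finite B"
    using fd_basis[OF assms(2,3)] by blast
  have "dim S \<le> card B" using assms(1) B by (intro dim_le_card) auto
  with B show ?thesis by simp
qed

lemma fd_dim_eq:
  assumes "subspace S" "S \<subseteq> T" "T \<subseteq> span F" "finite F" "dim T \<le> dim S"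
  shows "T \<subseteq> S"
proof
  fix x assume x: "x \<in> T"
  obtain B where B: "B \<subseteq> S" "independent B" "S \<subseteq> span B" "card B = dim S" "finite B"
    using fd_basis[of S F] assms by blast
  obtain C where C: "C \<subseteq> T" "independent C" "T \<subseteq> span C" "card C = dim T" "finite C"
    using fd_basis[OF assms(3,4)] by blast
  show "x \<in> S"
  proof (rule ccontr)
    assume "x \<notin> S"
    have sB: "span B = S" using B assms(1) span_subspace by blast
    hence "x \<notin> span B" using \<open>x \<notin> S\<close> by simp
    hence ind: "independent (insert x B)" using B(2) independent_insertI by blast
    have sub: "insert x B \<subseteq> span C" using x B assms(2) C(3) by auto
    have c1: "card (insert x B) \<le> card C"
      using independent_span_bound[OF C(5) ind sub] by (rule conjunct2)
    have "x \<notin> B" using \<open>x \<notin> span B\<close> span_base by blast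
    hence "card (insert x B) = card B + 1" using B(5) by simp
    moreover note c1
    ultimately show False using B(4) C(4) assms(5) by simp
  qed
qed

end

lemma (in vector_space_prod) dim_Times_fd:
  assumes S: "vs1.subspace S" "S \<subseteq> vs1.span F" "finite F"
    and T: "vs2.subspace T" "T \<subseteq> vs2.span G" "finite G"
  shows "p.dim (S \<times> T) = vs1.dim S + vs2.dim T"
proof -
  obtain BS where BS: "BS \<subseteq> S" "vs1.independent BS" "S \<subseteq> vs1.span BS" "card BS = vs1.dim S" "finite BS"
    using vs1.fd_basis[OF S(2,3)] by blast
  obtain BT where BT: "BT \<subseteq> T" "vs2.independent BT" "T \<subseteq> vs2.span BT" "card BT = vs2.dim T" "finite BT"
    using vs2.fd_basis[OF T(2,3)] by blast
  have sS: "vs1.span BS = S" using BS S(1) vs1.span_subspace by blast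
  have sT: "vs2.span BT = T" using BT T(1) vs2.span_subspace by blast
  define BP where "BP = BS \<times> {0} \<union> {0} \<times> BT"
  have spP: "p.span BP = S \<times> T"
    unfolding BP_def p.span_Un span_Times_sing1 span_Times_sing2 sS sT
    by force
  have z1: "0 \<notin> BS" using BS(2) vs1.dependent_zero by blast
  have z2: "0 \<notin> BT" using BT(2) vs2.dependent_zero by blast
  have indP: "p.independent BP"
    unfolding p.dependent_def BP_def
  proof safe
    fix a
    assume a: "a \<in> BS"
    assume "(a, 0) \<in> p.span (BS \<times> {0} \<union> {0} \<times> BT - {(a, 0)})"
    also have "BS \<times> {0} \<union> {0} \<times> BT - {(a, 0)} = (BS - {a}) \<times> {0} \<union> {0} \<times> BT"
      using a z1 z2 by auto
    finally show False
      using a vs1.dependent_def BS(2) z1 z2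
      by (auto simp: p.span_Un span_Times_sing1 span_Times_sing2)
  next
    fix b
    assume b: "b \<in> BT"
    assume "(0, b) \<in> p.span (BS \<times> {0} \<union> {0} \<times> BT - {(0, b)})"
    also have "(BS \<times> {0} \<union> {0} \<times> BT - {(0, b)}) = BS \<times> {0} \<union> {0} \<times> (BT - {b})"
      using b z1 z2 by auto
    finally show False
      using b vs2.dependent_def BT(2) z1 z2
      by (auto simp: p.span_Un span_Times_sing1 span_Times_sing2)
  qed
  from z1 have disj: "BS \<times> {0} \<inter> {0} \<times> BT = {}" by auto
  have "card BP = card BS + card BT"
    unfolding BP_def using disj BS(5) BT(5)
    by (simp add: card_Un_disjoint card_cartesian_product)
  moreover have "BP \<subseteq> S \<times> T" using spP p.span_superset by blast
  ultimately show ?thesis using p.dim_unique[of BP "S \<times> T"] spP indP BS(4) BT(4) by simp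
qed



definition ef :: "(nat \<Rightarrow> nat) \<Rightarrow> nat \<Rightarrow> ereal" where
  "ef q n = (if q n = 0 then -\<infinity> else ereal (ln (real (q n)) / real n))"

lemma ef_ge: "max (ef a n) (ef b n) \<le> ef (\<lambda>n. a n + b n) n"
proof -
  have "ln (real (a n)) / real n \<le> ln (real (a n + b n)) / real n" if "a n \<noteq> 0"
    using that by (intro divide_right_mono) auto
  moreover have "ln (real (b n)) / real n \<le> ln (real (a n + b n)) / real n" if "b n \<noteq> 0"
    using that by (intro divide_right_mono) auto
  ultimately show ?thesis unfolding ef_def by auto
qed

lemma ef_le: "ef (\<lambda>n. a n + b n) n \<le> max (ef a n) (ef b n) + ereal (ln 2 / real n)"
proof -
  have c: "ln 2 / real n \<ge> 0" by simp
  have key: "ln (real (x + y)) / real n \<le> ln (real y) / real n + ln 2 / real n"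
    if "x \<le> y" "y \<noteq> 0" for x y :: nat
  proof -
    have "ln (real (x + y)) \<le> ln (2 * real y)" using that by simp
    also have "\<dots> = ln 2 + ln (real y)" using that by (simp add: ln_mult)
    finally have "ln (real (x + y)) \<le> ln 2 + ln (real y)" .
    hence "ln (real (x + y)) / real n \<le> (ln 2 + ln (real y)) / real n"
      by (intro divide_right_mono) auto
    thus ?thesis by (simp add: add_divide_distrib)
  qed
  show ?thesis
  proof (cases "a n = 0 \<and> b n = 0")
    case True thus ?thesis unfolding ef_def by simp
  next
    case False
    show ?thesis
    proof (cases "a n = 0")
      case True
      then show ?thesis using False c unfolding ef_def by auto
    next
      case an: False
      show ?thesis
      proof (cases "b n = 0")
        case True
        then show ?thesis using an c unfolding ef_def by auto
      next
        case bn: False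
        show ?thesis
        proof (cases "a n \<le> b n")
          case True
          have "ln (real (a n + b n)) / real n \<le> ln (real (b n)) / real n + ln 2 / real n"
            using key[OF True bn] .
          then show ?thesis using an bn unfolding ef_def
            by (simp add: max_def)
        next
          case False
          have "ln (real (b n + a n)) / real n \<le> ln (real (a n)) / real n + ln 2 / real n"
            using key[of "b n" "a n"] False an by simp
          then show ?thesis using an bn unfolding ef_def
            by (simp add: max_def add.commute)
        qed
      qed
    qed
  qed
qed

lemma limsup_max_le:
  fixes f g :: "nat \<Rightarrow> ereal"
  shows "limsup (\<lambda>n. max (f n) (g n)) \<le> max (limsup f) (limsup g)"
proof -
  have "\<forall>y > max (limsup f) (limsup g). eventually (\<lambda>n. y > max (f n) (g n)) sequentially"
  proof (intro allI impI)
    fix y assume y: "y > max (limsup f) (limsup g)"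
    have "eventually (\<lambda>n. f n < y) sequentially" using y by (intro Limsup_lessD) auto
    moreover have "eventually (\<lambda>n. g n < y) sequentially" using y by (intro Limsup_lessD) auto
    ultimately show "eventually (\<lambda>n. y > max (f n) (g n)) sequentially"
      by eventually_elim auto
  qed
  thus ?thesis using Limsup_le_iff by blast
qed

lemma ef_limsup_add: "limsup (ef (\<lambda>n. a n + b n)) = max (limsup (ef a)) (limsup (ef b))"
proof (rule antisym)
  have lim0: "(\<lambda>n. ln 2 / real n) \<longlonglongrightarrow> 0"
    by (rule lim_const_over_n)
  have lim: "(\<lambda>n. ereal (ln 2 / real n)) \<longlonglongrightarrow> ereal 0"
    using lim0 by (simp only: lim_ereal)
  have pw: "\<forall>n. ef (\<lambda>n. a n + b n) n \<le> ereal (ln 2 / real n) + max (ef a n) (ef b n)"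
  proof
    fix n
    show "ef (\<lambda>n. a n + b n) n \<le> ereal (ln 2 / real n) + max (ef a n) (ef b n)"
      using ef_le[of a b n] by (simp only: add.commute)
  qed
  have "limsup (ef (\<lambda>n. a n + b n)) \<le> limsup (\<lambda>n. ereal (ln 2 / real n) + max (ef a n) (ef b n))"
    by (rule Limsup_mono, rule always_eventually, rule pw)
  also have "\<dots> = ereal 0 + limsup (\<lambda>n. max (ef a n) (ef b n))"
    by (rule ereal_limsup_lim_add[OF lim]) simp
  also have "\<dots> = limsup (\<lambda>n. max (ef a n) (ef b n))"
    by (simp only: zero_ereal_def[symmetric] add_0_left)
  also have "\<dots> \<le> max (limsup (ef a)) (limsup (ef b))"
    by (rule limsup_max_le)
  finally show "limsup (ef (\<lambda>n. a n + b n)) \<le> max (limsup (ef a)) (limsup (ef b))" .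
next
  have "limsup (ef a) \<le> limsup (ef (\<lambda>n. a n + b n))"
    by (rule Limsup_mono, rule always_eventually, rule allI, rule order.trans[OF max.cobounded1 ef_ge])
  moreover have "limsup (ef b) \<le> limsup (ef (\<lambda>n. a n + b n))"
    by (rule Limsup_mono, rule always_eventually, rule allI, rule order.trans[OF max.cobounded2 ef_ge])
  ultimately show "max (limsup (ef a)) (limsup (ef b)) \<le> limsup (ef (\<lambda>n. a n + b n))"
    by (rule max.boundedI)
qed

lemma ef_limsup_nonneg:
  assumes "\<And>N. \<exists>n>N. q n \<noteq> 0"
  shows "limsup (ef q) \<ge> 0"
proof (rule ccontr)
  assume "\<not> limsup (ef q) \<ge> 0"
  hence "limsup (ef q) < 0" by (simp only: not_le)
  hence "eventually (\<lambda>n. ef q n < 0) sequentially" by (rule Limsup_lessD)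
  then obtain N where N: "\<And>n. n \<ge> N \<Longrightarrow> ef q n < 0" unfolding eventually_sequentially by blast
  obtain n where n: "n > N" "q n \<noteq> 0" using assms by blast
  have "real (q n) \<ge> 1" using n(2) by simp
  hence "ln (real (q n)) \<ge> 0" by simp
  hence "ln (real (q n)) / real n \<ge> 0" by simp
  hence "ef q n \<ge> 0" using n(2) unfolding ef_def by simp
  moreover have "ef q n < 0" using N n(1) by simp
  ultimately show False by simp
qed

lemma ef_limsup_nonpos:
  assumes "\<And>n. n > N \<Longrightarrow> q n = 0"
  shows "limsup (ef q) \<le> 0"
proof (rule Limsup_bounded)
  show "eventually (\<lambda>n. ef q n \<le> 0) sequentially"
    using assms unfolding eventually_sequentially ef_def
    by (intro exI[of _ "Suc N"]) auto
qed


lemma filtD: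
  assumes "is_filtration s m V"
  shows filtD0: "V 0 = {0}" and filtD_sub: "module.subspace s (V n)"
    and filtD_Suc: "V n \<subseteq> V (Suc n)" and filtD_Un: "(\<Union>n. V n) = UNIV"
    and filtD_fin: "\<exists>B. finite B \<and> V (Suc n) \<subseteq> module.span s (B \<union> V n)"
proof -
  note h = assms[unfolded is_filtration_def]
  show "V 0 = {0}" using h by (elim conjE)
  show "module.subspace s (V n)" using h by (elim conjE allE)
  show "V n \<subseteq> V (Suc n)" using h by (elim conjE allE)
  show "(\<Union>n. V n) = UNIV" using h by (elim conjE)
  show "\<exists>B. finite B \<and> V (Suc n) \<subseteq> module.span s (B \<union> V n)" using h by (elim conjE allE)
qed

context vector_space begin

lemma filt_mono:
  assumes "is_filtration scale m V" "i \<le> j"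
  shows "V i \<subseteq> V j"
  using lift_Suc_mono_le[of V i j, OF filtD_Suc[OF assms(1)] assms(2)] .

lemma filt_sub: "is_filtration scale m V \<Longrightarrow> subspace (V n)"
  by (rule filtD_sub)

lemma filt_fd:
  assumes "is_filtration scale m V"
  shows "\<exists>F. finite F \<and> V n \<subseteq> span F"
proof (induction n)
  case 0
  have "V 0 = {0}" by (rule filtD0[OF assms])
  then show ?case by (intro exI[of _ "{}"]) simp
next
  case (Suc n)
  then obtain F where F: "finite F" "V n \<subseteq> span F" by blast
  obtain B where B: "finite B" "V (Suc n) \<subseteq> span (B \<union> V n)"
    using filtD_fin[OF assms, of n] by blast
  have "B \<union> V n \<subseteq> span (B \<union> F)"
    using F(2) span_mono[of F "B \<union> F"] span_superset[of "B \<union> F"] by blast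
  hence "span (B \<union> V n) \<subseteq> span (B \<union> F)"
    by (intro span_minimal) (auto simp: subspace_span)
  with B F show ?case by (intro exI[of _ "B \<union> F"]) auto
qed

lemma filt_dim_mono:
  assumes "is_filtration scale m V" "i \<le> j"
  shows "dim (V i) \<le> dim (V j)"
  using filt_fd[OF assms(1), of j] filt_mono[OF assms] fd_dim_le by blast

lemma filt_fin_eventually:
  assumes "is_filtration scale m V" "fin_dim_space scale"
  shows "\<exists>N. \<forall>n>N. quot_dim scale V n = 0"
proof -
  obtain B where B: "finite B" "span B = UNIV" using assms(2) unfolding fin_dim_space_def by blast
  have "\<forall>b\<in>B. \<exists>n. b \<in> V n" using filtD_Un[OF assms(1)] by blast
  then obtain f where f: "\<forall>b\<in>B. b \<in> V (f b)" by metis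
  define N where "N = Max (insert 0 (f ` B))"
  have "B \<subseteq> V N"
  proof
    fix b assume "b \<in> B"
    hence "f b \<le> N" unfolding N_def using B(1) by (intro Max_ge) auto
    thus "b \<in> V N" using f filt_mono[OF assms(1)] \<open>b \<in> B\<close> by blast
  qed
  hence "span B \<subseteq> V N" using filt_sub[OF assms(1)] by (intro span_minimal) auto
  hence VN: "V N = UNIV" using B(2) by blast
  have VU: "V n = UNIV" if "n \<ge> N" for n using filt_mono[OF assms(1) that] VN by blast
  have "quot_dim scale V n = 0" if "n > N" for n
  proof -
    have "V n = UNIV" "V (n - 1) = UNIV" using that VU by auto
    thus ?thesis unfolding quot_dim_def by simp
  qed
  thus ?thesis by blast
qed

lemma filt_not_fin_frequently:
  assumes "is_filtration scale m V" "\<not> fin_dim_space scale"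
  shows "\<exists>n>N. quot_dim scale V n \<noteq> 0"
proof (rule ccontr)
  assume "\<not> (\<exists>n>N. quot_dim scale V n \<noteq> 0)"
  hence q0: "\<And>n. n > N \<Longrightarrow> quot_dim scale V n = 0" by blast
  obtain F where F: "finite F" "V N \<subseteq> span F" using filt_fd[OF assms(1)] by blast
  have dle: "dim (V (N + d)) \<le> dim (V N)" for d
  proof (induction d)
    case 0 thus ?case by simp
  next
    case (Suc d)
    have "quot_dim scale V (Suc (N + d)) = 0" using q0 by simp
    hence "dim (V (Suc (N + d))) \<le> dim (V (N + d))" unfolding quot_dim_def by simp
    thus ?case using Suc.IH by simp
  qed
  have sub: "V n \<subseteq> V N" for n
  proof (cases "n \<le> N")
    case True thus ?thesis using filt_mono[OF assms(1)] by blast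
  next
    case False
    then obtain d where d: "n = N + d" by (metis le_add_diff_inverse nat_le_linear)
    obtain G where G: "finite G" "V n \<subseteq> span G" using filt_fd[OF assms(1)] by blast
    show ?thesis
      using fd_dim_eq[of "V N" "V n" G] filt_sub[OF assms(1), of N]
        filt_mono[OF assms(1), of N n] G dle[of d] d by auto
  qed
  have "UNIV \<subseteq> V N" using sub filtD_Un[OF assms(1)] by blast
  hence "span F = UNIV" using F(2) by blast
  with F(1) assms(2) show False unfolding fin_dim_space_def by blast
qed

end

lemma vsp: "vector_space sA \<Longrightarrow> vector_space sB \<Longrightarrow> vector_space_prod sA sB"
  unfolding vector_space_prod_def vector_space_pair_def by simp


lemma h_alg_ef: "h_alg s V = (if fin_dim_space s then 0 else limsup (ef (quot_dim s V)))"
  by (simp add: h_alg_def ef_def[abs_def])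

theorem proposition4p7:
  fixes sA :: "'k::field \<Rightarrow> 'a::ab_group_add \<Rightarrow> 'a" and mA :: "'a \<Rightarrow> 'a \<Rightarrow> 'a"
    and sB :: "'k \<Rightarrow> 'b::ab_group_add \<Rightarrow> 'b" and mB :: "'b \<Rightarrow> 'b \<Rightarrow> 'b"
    and V :: "nat \<Rightarrow> 'a set" and W :: "nat \<Rightarrow> 'b set"
  assumes "K_algebra sA mA" and "K_algebra sB mB"
    and "is_filtration sA mA V" and "is_filtration sB mB W"
  shows "h_alg (prod_scale sA sB) (\<lambda>n. V n \<times> W n) = max (h_alg sA V) (h_alg sB W)"
proof -
  have vA: "vector_space sA" using assms(1) unfolding K_algebra_def by blast
  have vB: "vector_space sB" using assms(2) unfolding K_algebra_def by blast
  interpret A: vector_space sA by (rule vA)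
  interpret B: vector_space sB by (rule vB)
  interpret P: vector_space_prod sA sB by (rule vsp[OF vA vB])
  have scale_eq: "module_prod.scale sA sB = prod_scale sA sB"
    by (intro ext) (simp add: P.scale_def prod_scale_def)
  have vP: "vector_space (prod_scale sA sB)" using P.p.vector_space_axioms unfolding scale_eq .
  have dimP: "vector_space.dim (prod_scale sA sB) (V n \<times> W n) = A.dim (V n) + B.dim (W n)" for n
  proof -
    obtain F where F: "finite F" "V n \<subseteq> A.span F" using A.filt_fd[OF assms(3)] by blast
    obtain G where G: "finite G" "W n \<subseteq> B.span G" using B.filt_fd[OF assms(4)] by blast
    show ?thesis
      using P.dim_Times_fd[OF A.filt_sub[OF assms(3)] F(2,1) B.filt_sub[OF assms(4)] G(2,1)]
      unfolding scale_eq .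
  qed
  have qP: "quot_dim (prod_scale sA sB) (\<lambda>n. V n \<times> W n) = (\<lambda>n. quot_dim sA V n + quot_dim sB W n)"
  proof
    fix n
    show "quot_dim (prod_scale sA sB) (\<lambda>n. V n \<times> W n) n = quot_dim sA V n + quot_dim sB W n"
      unfolding quot_dim_def dimP
      using A.filt_dim_mono[OF assms(3), of "n - 1" n] B.filt_dim_mono[OF assms(4), of "n - 1" n]
      by simp
  qed
  have mh1: "module_hom (prod_scale sA sB) sA fst"
    using vP vA unfolding module_hom_iff module_iff_vector_space by (simp add: prod_scale_def)
  have mh2: "module_hom (prod_scale sA sB) sB snd"
    using vP vB unfolding module_hom_iff module_iff_vector_space by (simp add: prod_scale_def)
  have sf: "range (fst :: 'a \<times> 'b \<Rightarrow> 'a) = UNIV" by (rule surjI[of fst "\<lambda>x. (x, 0)"]) simp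
  have sn: "range (snd :: 'a \<times> 'b \<Rightarrow> 'b) = UNIV" by (rule surjI[of snd "\<lambda>x. (0, x)"]) simp
  have finP: "fin_dim_space (prod_scale sA sB) \<longleftrightarrow> fin_dim_space sA \<and> fin_dim_space sB"
  proof
    assume "fin_dim_space (prod_scale sA sB)"
    then obtain C where C: "finite C" "module.span (prod_scale sA sB) C = UNIV"
      unfolding fin_dim_space_def by blast
    have "A.span (fst ` C) = UNIV"
      using module_hom.span_image[OF mh1, of C] C(2) by (simp add: sf)
    moreover have "B.span (snd ` C) = UNIV"
      using module_hom.span_image[OF mh2, of C] C(2) by (simp add: sn)
    ultimately show "fin_dim_space sA \<and> fin_dim_space sB"
      using C(1) unfolding fin_dim_space_def by blast
  next
    assume "fin_dim_space sA \<and> fin_dim_space sB"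
    then obtain C D where C: "finite C" "A.span C = UNIV" and D: "finite D" "B.span D = UNIV"
      unfolding fin_dim_space_def by blast
    have "P.p.span (C \<times> {0} \<union> {0} \<times> D) = {x + y |x y. x \<in> UNIV \<times> {0} \<and> y \<in> {0} \<times> UNIV}"
      by (simp only: P.p.span_Un P.span_Times_sing2 P.span_Times_sing1 C(2) D(2))
    also have "\<dots> = UNIV"
    proof -
      have ab: "(a, b) \<in> {x + y |x y. x \<in> (UNIV :: 'a set) \<times> {0} \<and> y \<in> {0} \<times> (UNIV :: 'b set)}" for a b
        by (rule CollectI, rule exI[of _ "(a, 0)"], rule exI[of _ "(0, b)"]) simp
      show ?thesis
      proof (rule sym, rule UNIV_eq_I)
        fix p :: "'a \<times> 'b"
        show "p \<in> {x + y |x y. x \<in> (UNIV :: 'a set) \<times> {0} \<and> y \<in> {0} \<times> (UNIV :: 'b set)}"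
          using ab[of "fst p" "snd p"] by (simp only: prod.collapse)
      qed
    qed
    finally have "P.p.span (C \<times> {0} \<union> {0} \<times> D) = UNIV" .
    hence "module.span (prod_scale sA sB) (C \<times> {0} \<union> {0} \<times> D) = UNIV"
      unfolding scale_eq .
    moreover have "finite (C \<times> {0} \<union> {0} \<times> D)" using C(1) D(1) by simp
    ultimately show "fin_dim_space (prod_scale sA sB)"
      unfolding fin_dim_space_def by blast
  qed
  have LP: "limsup (ef (quot_dim (prod_scale sA sB) (\<lambda>n. V n \<times> W n)))
      = max (limsup (ef (quot_dim sA V))) (limsup (ef (quot_dim sB W)))"
    unfolding qP by (rule ef_limsup_add)
  define LA where "LA = limsup (ef (quot_dim sA V))"
  define LB where "LB = limsup (ef (quot_dim sB W))"
  have hA: "h_alg sA V = (if fin_dim_space sA then 0 else LA)" unfolding LA_def by (rule h_alg_ef)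
  have hB: "h_alg sB W = (if fin_dim_space sB then 0 else LB)" unfolding LB_def by (rule h_alg_ef)
  have hP: "h_alg (prod_scale sA sB) (\<lambda>n. V n \<times> W n) =
      (if fin_dim_space (prod_scale sA sB) then 0 else max LA LB)"
    unfolding LA_def LB_def LP[symmetric] by (rule h_alg_ef)
  have leA: "LA \<le> 0" if fA: "fin_dim_space sA"
  proof -
    obtain N where "\<forall>n>N. quot_dim sA V n = 0" using A.filt_fin_eventually[OF assms(3) fA] by blast
    thus ?thesis unfolding LA_def by (intro ef_limsup_nonpos[of N]) blast
  qed
  have leB: "LB \<le> 0" if fB: "fin_dim_space sB"
  proof -
    obtain N where "\<forall>n>N. quot_dim sB W n = 0" using B.filt_fin_eventually[OF assms(4) fB] by blast
    thus ?thesis unfolding LB_def by (intro ef_limsup_nonpos[of N]) blast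
  qed
  have geA: "LA \<ge> 0" if nA: "\<not> fin_dim_space sA"
    unfolding LA_def by (rule ef_limsup_nonneg, rule A.filt_not_fin_frequently[OF assms(3) nA])
  have geB: "LB \<ge> 0" if nB: "\<not> fin_dim_space sB"
    unfolding LB_def by (rule ef_limsup_nonneg, rule B.filt_not_fin_frequently[OF assms(4) nB])
  show ?thesis
  proof (cases "fin_dim_space sA")
    case fA: True
    show ?thesis
    proof (cases "fin_dim_space sB")
      case fB: True
      have "fin_dim_space (prod_scale sA sB)" using fA fB finP by blast
      thus ?thesis unfolding hP hA hB using fA fB by simp
    next
      case nB: False
      have nP: "\<not> fin_dim_space (prod_scale sA sB)" using nB finP by blast
      have "max LA LB = LB" using leA[OF fA] geB[OF nB] by (intro max_absorb2) (rule order.trans)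
      moreover have "max 0 LB = LB" using geB[OF nB] by (rule max_absorb2)
      ultimately show ?thesis unfolding hP hA hB using fA nB nP by simp
    qed
  next
    case nA: False
    show ?thesis
    proof (cases "fin_dim_space sB")
      case fB: True
      have nP: "\<not> fin_dim_space (prod_scale sA sB)" using nA finP by blast
      have "max LA LB = LA" using leB[OF fB] geA[OF nA] by (intro max_absorb1) (rule order.trans)
      moreover have "max LA 0 = LA" using geA[OF nA] by (rule max_absorb1)
      ultimately show ?thesis unfolding hP hA hB using nA fB nP by simp
    next
      case nB: False
      have nP: "\<not> fin_dim_space (prod_scale sA sB)" using nA finP by blast
      thus ?thesis unfolding hP hA hB using nA nB nP by simp
    qed
  qed
qed

end
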